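(* Let $n\ge 1$, $\rho\in(0,1)$, $\alpha\ge 0$, and let $F:\mathbb{R}^n\to\mathbb{R}^n$ be $\rho$-Lipschitz with $F(x)=Gx+\xi(x)$, where $G\in\mathbb{R}^{n\times n}$ is symmetric positive semidefinite with $G\preccurlyeq\rho I$ and $\xi:\mathbb{R}^n\to\mathbb{R}^n$ is $\alpha$-Lipschitz. Let $C\ge1$, $k\ge1$ an integer, $x_0\in\mathbb{R}^n$, $\varepsilon>0$. Let $x_{i+1}=F(x_i)$ for $i=0,\dots,k$, $R=[x_0-x_1,\dots,x_k-x_{k+1}]$, and suppose $\tilde c\in\mathbb{R}^{k+1}$ satisfies $\mathbf 1^T\tilde c=1$, $\|\tilde c\|_1\le C$ and $$\|R\tilde c\|\le \min\{\|Rc\|:\mathbf 1^Tc=1,\ \|c\|_1\le C\}+\varepsilon\|F(x_0)-x_0\|.$$ Let $x_e=\sum_{i=0}^k\tilde c_ix_i$. Then $$\|F(x_e)-x_e\|\le\Big(\max_{x\in[0,\rho]}|p_*(x)|+3C\alpha k+\varepsilon\Big)\|F(x_0)-x_0\|,$$ where $p_*$ is any minimizer of $\max_{x\in[0,\rho]}|p(x)|$ over $p\in\mathbb{R}_k[X]$ with $p(1)=1$, $\|p\|_1\le C$.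
   Context: $\|\cdot\|$ is the Euclidean norm. $\mathbb{R}_k[X]$ is the space of real polynomials of degree at most $k$; $\|p\|_1$ is the sum of the absolute values of the coefficients of $p$, and $\|c\|_1=\sum_i|c_i|$ for vectors. *)

theory Defs
  imports "HOL-Analysis.Analysis" "HOL-Computational_Algebra.Polynomial"
begin

definition poly_l1 :: "real poly \<Rightarrow> real" where
  "poly_l1 p = (\<Sum>i\<le>degree p. \<bar>coeff p i\<bar>)"

definition admissible_poly :: "nat \<Rightarrow> real \<Rightarrow> real poly \<Rightarrow> bool" where
  "admissible_poly k C p \<longleftrightarrow> degree p \<le> k \<and> poly p 1 = 1 \<and> poly_l1 p \<le> C"

definition poly_max_abs :: "real \<Rightarrow> real poly \<Rightarrow> real" where
  "poly_max_abs \<rho> p = (SUP x\<in>{0..\<rho>}. \<bar>poly p x\<bar>)"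

end

theory Submission
  imports Defs
begin

lemma sym_inner:
  fixes G :: "real^'n^'n"
  assumes "transpose G = G"
  shows "inner (G *v u) w = inner u (G *v w)"
proof -
  have "G *v u = u v* G" using vector_transpose_matrix[of u G] assms by simp
  thus ?thesis by (simp add: dot_lmul_matrix)
qed

lemma eigvec:
  fixes G :: "real^'n^'n"
  assumes sym: "transpose G = G" and S: "subspace S" and inv: "\<And>u. u \<in> S \<Longrightarrow> G *v u \<in> S"
    and ne: "S \<noteq> {0}"
  shows "\<exists>e\<in>S. norm e = 1 \<and> G *v e = inner e (G *v e) *\<^sub>R e"
proof -
  define K where "K = S \<inter> sphere 0 1"
  have cK: "compact K" unfolding K_def using closed_subspace[OF S] compact_sphere by blast
  obtain u where u: "u \<in> S" "u \<noteq> 0" using ne S subspace_0 by blast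
  have "u /\<^sub>R norm u \<in> K" using u S unfolding K_def by (simp add: subspace_scale)
  hence neK: "K \<noteq> {}" by blast
  have cont: "continuous_on K (\<lambda>x. inner x (G *v x))"
    by (intro continuous_intros linear_continuous_on matrix_vector_mul_bounded_linear)
  obtain e where e: "e \<in> K" and emax: "\<And>y. y \<in> K \<Longrightarrow> inner y (G *v y) \<le> inner e (G *v e)"
    using continuous_attains_sup[OF cK neK cont] by blast
  define l where "l = inner e (G *v e)"
  have eS: "e \<in> S" and ne1: "norm e = 1" using e unfolding K_def by auto
  define A where "A = (\<lambda>x. l *\<^sub>R x - G *v x)"
  have Apsd: "0 \<le> inner y (A y)" if "y \<in> S" for y
  proof (cases "y = 0")
    case True then show ?thesis by (simp add: A_def)
  next
    case False
    have "y /\<^sub>R norm y \<in> K" using that S False unfolding K_def by (simp add: subspace_scale)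
    from emax[OF this] have "inner y (G *v y) / (norm y)^2 \<le> l"
      by (simp add: l_def matrix_vector_mult_scaleR power2_eq_square divide_inverse inverse_mult_distrib mult_ac)
    hence "inner y (G *v y) \<le> l * (norm y)^2" using False by (simp add: divide_le_eq)
    thus ?thesis by (simp add: A_def inner_diff_right power2_norm_eq_inner)
  qed
  have Asym: "inner x (A y) = inner (A x) y" for x y
    by (simp add: A_def inner_diff_right inner_diff_left sym_inner[OF sym])
  have Alin: "A (x - t *\<^sub>R y) = A x - t *\<^sub>R A y" for x y t
    by (simp add: A_def algebra_simps matrix_vector_mult_scaleR matrix_vector_mult_diff_distrib)
  have Ae0: "inner e (A e) = 0" using ne1 by (simp add: A_def l_def inner_diff_right power2_norm_eq_inner[symmetric])
  define a where "a = A e"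
  have aS: "a \<in> S" unfolding a_def A_def using S eS inv by (simp add: subspace_diff subspace_scale)
  have "a = 0"
  proof (rule ccontr)
    assume "a \<noteq> 0"
    hence apos: "0 < inner a a" by simp
    define q where "q = inner a (A a)"
    define t where "t = inner a a / (\<bar>q\<bar> + 1)"
    have tpos: "0 < t" using apos by (simp add: t_def)
    have "e - t *\<^sub>R a \<in> S" using eS aS S by (simp add: subspace_diff subspace_scale)
    from Apsd[OF this] have "0 \<le> inner (e - t *\<^sub>R a) (A e - t *\<^sub>R A a)" by (simp add: Alin)
    also have "\<dots> = inner e (A e) - t * inner e (A a) - t * inner a (A e) + t*t*q"
      by (simp add: inner_diff_left inner_diff_right q_def algebra_simps)
    also have "\<dots> = - 2 * t * inner a a + t * t * q"
      using Ae0 Asym[of e a] by (simp add: a_def)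
    finally have "0 \<le> t * (t * q - 2 * inner a a)" by (simp add: algebra_simps)
    hence "2 * inner a a \<le> t * q" using tpos by (simp add: zero_le_mult_iff)
    also have "t * q \<le> t * \<bar>q\<bar>" using tpos by (simp add: mult_left_mono)
    also have "\<dots> < inner a a" using apos by (simp add: t_def field_simps)
    finally show False using apos by simp
  qed
  hence "G *v e = l *\<^sub>R e" by (simp add: a_def A_def)
  thus ?thesis using eS ne1 l_def by blast
qed

lemma pow_linear: "linear (((*v) (G::real^'n^'n)) ^^ i)"
  by (induction i) (auto intro: linear_compose[of _ "(*v) G", unfolded o_def] simp: linear_id[unfolded id_def])

lemma pow_inv:
  fixes G :: "real^'n^'n"
  assumes "\<And>u. u \<in> S \<Longrightarrow> G *v u \<in> S" "u \<in> S"
  shows "(((*v) G) ^^ i) u \<in> S"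
  using assms by (induction i) auto

lemma pow_eig:
  fixes G :: "real^'n^'n"
  assumes "G *v e = l *\<^sub>R e"
  shows "(((*v) G) ^^ i) e = l ^ i *\<^sub>R e"
  using assms by (induction i) (auto simp: matrix_vector_mult_scaleR)

lemma spec_bound:
  fixes G :: "real^'n^'n"
  assumes sym: "transpose G = G"
    and psd: "\<And>v. 0 \<le> v \<bullet> (G *v v)"
    and le: "\<And>v. v \<bullet> (G *v v) \<le> \<rho> * (v \<bullet> v)"
    and M: "\<And>x. 0 \<le> x \<Longrightarrow> x \<le> \<rho> \<Longrightarrow> \<bar>\<Sum>i\<le>n. c i * x ^ i\<bar> \<le> M"
    and rho: "0 \<le> \<rho>"
  shows "norm (\<Sum>i\<le>n. c i *\<^sub>R (((*v) G) ^^ i) v) \<le> M * norm v"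
proof -
  define P where "P = (\<lambda>v. \<Sum>i\<le>n. c i *\<^sub>R (((*v) G) ^^ i) v)"
  have M0: "0 \<le> M" using M[of 0] rho by (meson abs_ge_zero order_trans order_refl)
  have Plin: "P (a *\<^sub>R x + y) = a *\<^sub>R P x + P y" for a x y
  proof -
    have "P (a *\<^sub>R x + y) = (\<Sum>i\<le>n. a *\<^sub>R (c i *\<^sub>R (((*v) G) ^^ i) x) + c i *\<^sub>R (((*v) G) ^^ i) y)"
      unfolding P_def
      by (intro sum.cong refl) (simp add: linear_add[OF pow_linear] linear_scale[OF pow_linear] algebra_simps)
    thus ?thesis unfolding P_def by (simp add: sum.distrib scaleR_sum_right)
  qed
  have P0: "P 0 = 0" unfolding P_def by (simp add: linear_0[OF pow_linear])
  have Pinv: "P u \<in> S" if "subspace S" "\<And>u. u \<in> S \<Longrightarrow> G *v u \<in> S" "u \<in> S" for S u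
    unfolding P_def using that
    by (intro subspace_sum subspace_scale) (auto intro: pow_inv)
  have main: "\<forall>S. subspace S \<longrightarrow> (\<forall>u\<in>S. G *v u \<in> S) \<longrightarrow> dim S = d \<longrightarrow> (\<forall>v\<in>S. norm (P v) \<le> M * norm v)" for d
  proof (induction d rule: less_induct)
    case (less d)
    show ?case
    proof (intro allI impI ballI)
      fix S v assume S: "subspace S" and inv: "\<forall>u\<in>S. G *v u \<in> S" and dS: "dim S = d" and v: "v \<in> S"
      show "norm (P v) \<le> M * norm v"
      proof (cases "S = {0}")
        case True
        then show ?thesis using v P0 by simp
      next
        case False
        obtain e where eS: "e \<in> S" and ne: "norm e = 1" and Ge: "G *v e = inner e (G *v e) *\<^sub>R e"
          using eigvec[OF sym S _ False] inv by blast
        define l where "l = inner e (G *v e)"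
        have Gl: "G *v e = l *\<^sub>R e" unfolding l_def by (rule Ge)
        have ee: "inner e e = 1" using ne by (simp add: norm_eq_1)
        have l0: "0 \<le> l" "l \<le> \<rho>" using psd[of e] le[of e] ee by (auto simp: l_def)
        define S' where "S' = S \<inter> {x. inner e x = 0}"
        have sS': "subspace S'" unfolding S'_def using S subspace_hyperplane by (blast intro: subspace_inter)
        have inv': "\<forall>u\<in>S'. G *v u \<in> S'"
        proof
          fix u assume u: "u \<in> S'"
          have "inner e (G *v u) = inner (G *v e) u" using sym_inner[OF sym] by simp
          also have "\<dots> = l * inner e u" using Gl by simp
          finally show "G *v u \<in> S'" using u inv unfolding S'_def by auto
        qed
        have "e \<notin> S'" using ee unfolding S'_def by auto
        hence "S' \<subset> S" using eS unfolding S'_def by blast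
        moreover have "span S' = S'" "span S = S" using S sS' by simp_all
        ultimately have "span S' \<subset> span S" by (simp del: span_eq_iff)
        hence dlt: "dim S' < d" using dim_psubset dS by blast
        have IH: "\<forall>v\<in>S'. norm (P v) \<le> M * norm v" using less.IH[OF dlt] sS' inv' by blast
        define w where "w = v - inner e v *\<^sub>R e"
        have wS: "w \<in> S'" unfolding w_def S'_def using S v eS ee
          by (simp add: subspace_diff subspace_scale inner_diff_right)
        have vdec: "v = inner e v *\<^sub>R e + w" by (simp add: w_def)
        define q where "q = (\<Sum>i\<le>n. c i * l ^ i)"
        have Pe: "P e = q *\<^sub>R e" unfolding P_def q_def
          using pow_eig[OF Gl] by (simp add: scaleR_sum_left[symmetric])
        have q: "\<bar>q\<bar> \<le> M" using M l0 q_def by simp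
        have Pv: "P v = (inner e v * q) *\<^sub>R e + P w" using Plin[of "inner e v" e w] vdec Pe by simp
        have PwS: "P w \<in> S'" using Pinv[OF sS' _ wS] inv' by blast
        hence "inner e (P w) = 0" unfolding S'_def by simp
        hence o1: "orthogonal ((inner e v * q) *\<^sub>R e) (P w)" by (simp add: orthogonal_def)
        have "inner e w = 0" using wS unfolding S'_def by simp
        hence o2: "orthogonal (inner e v *\<^sub>R e) w" by (simp add: orthogonal_def)
        have nv: "(norm v)^2 = (inner e v)^2 + (norm w)^2"
          using norm_add_Pythagorean[OF o2] vdec ne by (simp add: power_mult_distrib)
        have "(norm (P v))^2 = (inner e v * q)^2 + (norm (P w))^2"
          using norm_add_Pythagorean[OF o1] Pv ne by (simp add: power_mult_distrib)
        also have "\<dots> \<le> (inner e v)^2 * M^2 + (M * norm w)^2"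
        proof (intro add_mono)
          show "(inner e v * q)^2 \<le> (inner e v)^2 * M^2"
            unfolding power_mult_distrib using q
            by (intro mult_left_mono) (auto simp: abs_le_square_iff intro: power_mono[of "\<bar>q\<bar>" M 2, simplified])
          show "(norm (P w))^2 \<le> (M * norm w)^2"
            using IH wS by (intro power_mono) auto
        qed
        also have "\<dots> = (M * norm v)^2" using nv by (simp add: algebra_simps power_mult_distrib)
        finally have "(norm (P v))^2 \<le> (M * norm v)^2" .
        moreover have "0 \<le> M * norm v" using M0 by simp
        ultimately show ?thesis by (rule power2_le_imp_le)
      qed
    qed
  qed
  show ?thesis using main[of "dim (UNIV::(real^'n) set)"] subspace_UNIV unfolding P_def by blast
qed

theorem corollary1:
  fixes F \<xi> :: "real^'n \<Rightarrow> real^'n"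
    and G :: "real^'n^'n"
    and \<rho> \<alpha> C \<epsilon> :: real
    and k :: nat
    and x0 :: "real^'n"
    and ct :: "nat \<Rightarrow> real"
    and pstar :: "real poly"
  assumes rho: "0 < \<rho>" "\<rho> < 1"
    and alpha: "0 \<le> \<alpha>"
    and F_lip: "\<rho>-lipschitz_on UNIV F"
    and F_decomp: "\<And>x. F x = G *v x + \<xi> x"
    and G_sym: "transpose G = G"
    and G_psd: "\<And>v. 0 \<le> v \<bullet> (G *v v)"
    and G_le: "\<And>v. v \<bullet> (G *v v) \<le> \<rho> * (v \<bullet> v)"
    and xi_lip: "\<alpha>-lipschitz_on UNIV \<xi>"
    and C: "1 \<le> C"
    and k: "1 \<le> k"
    and eps: "0 < \<epsilon>"
    and ct_sum: "(\<Sum>i=0..k. ct i) = 1"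
    and ct_l1: "(\<Sum>i=0..k. \<bar>ct i\<bar>) \<le> C"
    and ct_opt: "norm (\<Sum>i=0..k. ct i *\<^sub>R ((F ^^ i) x0 - (F ^^ Suc i) x0))
       \<le> (INF c\<in>{c::nat \<Rightarrow> real. (\<Sum>i=0..k. c i) = 1 \<and> (\<Sum>i=0..k. \<bar>c i\<bar>) \<le> C}.
             norm (\<Sum>i=0..k. c i *\<^sub>R ((F ^^ i) x0 - (F ^^ Suc i) x0)))
         + \<epsilon> * norm (F x0 - x0)"
    and pstar_adm: "admissible_poly k C pstar"
    and pstar_min: "\<And>p. admissible_poly k C p \<Longrightarrow> poly_max_abs \<rho> pstar \<le> poly_max_abs \<rho> p"
  shows "let xe = (\<Sum>i=0..k. ct i *\<^sub>R (F ^^ i) x0) in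
         norm (F xe - xe) \<le> (poly_max_abs \<rho> pstar + 3 * C * \<alpha> * real k + \<epsilon>) * norm (F x0 - x0)"
proof -
  define x where "x = (\<lambda>i. (F ^^ i) x0)"
  define r where "r = (\<lambda>i. x i - x (Suc i))"
  define N where "N = norm (F x0 - x0)"
  define Gi where "Gi = (\<lambda>i. ((*v) G) ^^ i)"
  define M where "M = poly_max_abs \<rho> pstar"
  define cp where "cp = (\<lambda>i. coeff pstar i)"
  have xS: "x (Suc i) = F (x i)" for i by (simp add: x_def)
  have x0: "x 0 = x0" by (simp add: x_def)
  have N0: "0 \<le> N" by (simp add: N_def)
  have r0: "norm (r 0) = N" by (simp add: r_def N_def xS x0 norm_minus_commute)
  have Flip: "norm (F a - F b) \<le> \<rho> * norm (a - b)" for a b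
    using lipschitz_onD[OF F_lip, of a b] by (simp add: dist_norm)
  have xilip: "norm (\<xi> a - \<xi> b) \<le> \<alpha> * norm (a - b)" for a b
    using lipschitz_onD[OF xi_lip, of a b] by (simp add: dist_norm)
  have rn: "norm (r i) \<le> N" for i
  proof (induction i)
    case 0 then show ?case using r0 by simp
  next
    case (Suc i)
    have "norm (r (Suc i)) \<le> \<rho> * norm (r i)" using Flip[of "x i" "x (Suc i)"] by (simp add: r_def xS)
    also have "\<dots> \<le> 1 * N" using Suc rho by (intro mult_mono) auto
    finally show ?case by simp
  qed
  have xd: "norm (x i - x0) \<le> real i * N" for i
  proof (induction i)
    case 0 then show ?case by (simp add: x0)
  next
    case (Suc i)
    have "x (Suc i) - x0 = (x i - x0) - r i" by (simp add: r_def)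
    hence "norm (x (Suc i) - x0) \<le> norm (x i - x0) + norm (r i)" by (metis norm_triangle_ineq4)
    then show ?case using Suc rn[of i] by (simp add: algebra_simps)
  qed
  have Gn: "norm (G *v u) \<le> \<rho> * norm u" for u
  proof -
    have "norm (\<Sum>i\<le>1. (if i = 1 then 1 else 0) *\<^sub>R (((*v) G) ^^ i) u) \<le> \<rho> * norm u"
      using rho by (intro spec_bound[OF G_sym G_psd G_le]) auto
    thus ?thesis by simp
  qed
  have eb: "norm (r i - Gi i (r 0)) \<le> real i * \<alpha> * N" for i
  proof (induction i)
    case 0 then show ?case by (simp add: Gi_def)
  next
    case (Suc i)
    have "r (Suc i) = F (x i) - F (x (Suc i))" unfolding r_def by (simp only: xS)
    also have "\<dots> = G *v r i + (\<xi> (x i) - \<xi> (x (Suc i)))"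
      unfolding r_def F_decomp[of "x i"] F_decomp[of "x (Suc i)"] by (simp add: matrix_vector_mult_diff_distrib)
    finally have "r (Suc i) = G *v r i + (\<xi> (x i) - \<xi> (x (Suc i)))" .
    hence "r (Suc i) - Gi (Suc i) (r 0) = G *v (r i - Gi i (r 0)) + (\<xi> (x i) - \<xi> (x (Suc i)))"
      by (simp add: Gi_def matrix_vector_mult_diff_distrib)
    hence "norm (r (Suc i) - Gi (Suc i) (r 0)) \<le> norm (G *v (r i - Gi i (r 0))) + norm (\<xi> (x i) - \<xi> (x (Suc i)))"
      by (metis norm_triangle_ineq)
    also have "\<dots> \<le> 1 * norm (r i - Gi i (r 0)) + \<alpha> * N"
    proof (intro add_mono)
      show "norm (G *v (r i - Gi i (r 0))) \<le> 1 * norm (r i - Gi i (r 0))"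
        using Gn[of "r i - Gi i (r 0)"] mult_right_mono[of \<rho> 1 "norm (r i - Gi i (r 0))"] rho by simp
      show "norm (\<xi> (x i) - \<xi> (x (Suc i))) \<le> \<alpha> * N"
        using xilip[of "x i" "x (Suc i)"] mult_left_mono[OF rn[of i] alpha] unfolding r_def by simp
    qed
    finally show ?case using Suc by (simp add: algebra_simps)
  qed
  have sb: "norm (\<Sum>i=0..k. a i *\<^sub>R v i) \<le> C * B"
    if "\<And>i. i \<le> k \<Longrightarrow> norm (v i) \<le> B" "(\<Sum>i=0..k. \<bar>a i\<bar>) \<le> C" "0 \<le> B"
    for a :: "nat \<Rightarrow> real" and v :: "nat \<Rightarrow> real^'n" and B
  proof -
    have "norm (\<Sum>i=0..k. a i *\<^sub>R v i) \<le> (\<Sum>i=0..k. norm (a i *\<^sub>R v i))" by (rule norm_sum)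
    also have "\<dots> \<le> (\<Sum>i=0..k. \<bar>a i\<bar> * B)"
      using that(1) by (intro sum_mono) (auto intro: mult_left_mono)
    also have "\<dots> = (\<Sum>i=0..k. \<bar>a i\<bar>) * B" by (simp add: sum_distrib_right)
    also have "\<dots> \<le> C * B" using that(2,3) by (rule mult_right_mono)
    finally show ?thesis .
  qed
  have degp: "degree pstar \<le> k" and p1: "poly pstar 1 = 1" and pl1: "poly_l1 pstar \<le> C"
    using pstar_adm unfolding admissible_poly_def by auto
  have polysum: "poly pstar y = (\<Sum>i=0..k. cp i * y ^ i)" for y
  proof -
    have "poly pstar y = (\<Sum>i\<le>degree pstar. cp i * y ^ i)" by (simp add: poly_altdef cp_def)
    also have "\<dots> = (\<Sum>i=0..k. cp i * y ^ i)"
      using degp by (intro sum.mono_neutral_left) (auto simp: cp_def coeff_eq_0)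
    finally show ?thesis .
  qed
  have cpl1: "(\<Sum>i=0..k. \<bar>cp i\<bar>) \<le> C"
  proof -
    have "(\<Sum>i=0..k. \<bar>cp i\<bar>) = poly_l1 pstar" unfolding poly_l1_def cp_def atLeast0AtMost
      using degp by (intro sum.mono_neutral_right) (auto simp: cp_def coeff_eq_0)
    thus ?thesis using pl1 by simp
  qed
  have cpsum: "(\<Sum>i=0..k. cp i) = 1" using polysum[of 1] p1 by simp
  have Mb: "\<bar>poly pstar y\<bar> \<le> M" if "0 \<le> y" "y \<le> \<rho>" for y
  proof -
    have "compact ((\<lambda>y. \<bar>poly pstar y\<bar>) ` {0..\<rho>})"
      by (intro compact_continuous_image continuous_intros) auto
    hence "bdd_above ((\<lambda>y. \<bar>poly pstar y\<bar>) ` {0..\<rho>})"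
      by (intro bounded_imp_bdd_above compact_imp_bounded)
    thus ?thesis unfolding M_def poly_max_abs_def using that by (intro cSUP_upper) auto
  qed
  have Rcp: "norm (\<Sum>i=0..k. cp i *\<^sub>R r i) \<le> M * N + C * (real k * \<alpha> * N)"
  proof -
    have "(\<Sum>i=0..k. cp i *\<^sub>R r i) = (\<Sum>i\<le>k. cp i *\<^sub>R (((*v) G) ^^ i) (r 0)) + (\<Sum>i=0..k. cp i *\<^sub>R (r i - Gi i (r 0)))"
      (is "?L = ?A + ?B")
      by (simp add: Gi_def atLeast0AtMost sum.distrib[symmetric] scaleR_diff_right)
    hence "norm ?L \<le> norm ?A + norm ?B" using norm_triangle_ineq[of ?A ?B] by simp
    also have "\<dots> \<le> M * N + C * (real k * \<alpha> * N)"
    proof (intro add_mono)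
      show "norm (\<Sum>i\<le>k. cp i *\<^sub>R (((*v) G) ^^ i) (r 0)) \<le> M * N"
        unfolding r0[symmetric] using rho Mb polysum atLeast0AtMost
        by (intro spec_bound[OF G_sym G_psd G_le]) auto
      show "norm (\<Sum>i=0..k. cp i *\<^sub>R (r i - Gi i (r 0))) \<le> C * (real k * \<alpha> * N)"
      proof (rule sb[OF _ cpl1])
        fix i assume "i \<le> k"
        have "real i * \<alpha> * N \<le> real k * \<alpha> * N" using \<open>i \<le> k\<close> alpha N0
          by (intro mult_right_mono) auto
        thus "norm (r i - Gi i (r 0)) \<le> real k * \<alpha> * N" using eb[of i] by linarith
      qed (use alpha N0 in auto)
    qed
    finally show ?thesis .
  qed
  define Cset where "Cset = {c::nat \<Rightarrow> real. (\<Sum>i=0..k. c i) = 1 \<and> (\<Sum>i=0..k. \<bar>c i\<bar>) \<le> C}"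
  have "(INF c\<in>Cset. norm (\<Sum>i=0..k. c i *\<^sub>R r i)) \<le> norm (\<Sum>i=0..k. cp i *\<^sub>R r i)"
    by (rule cINF_lower) (auto simp: Cset_def cpsum cpl1 intro!: bdd_belowI[where m=0])
  hence Rct: "norm (\<Sum>i=0..k. ct i *\<^sub>R r i) \<le> M * N + C * (real k * \<alpha> * N) + \<epsilon> * N"
    using ct_opt Rcp unfolding Cset_def r_def x_def N_def by simp
  define xe where "xe = (\<Sum>i=0..k. ct i *\<^sub>R x i)"
  have decomp: "F xe - xe = ((\<xi> xe - \<xi> x0) - (\<Sum>i=0..k. ct i *\<^sub>R (\<xi> (x i) - \<xi> x0))) - (\<Sum>i=0..k. ct i *\<^sub>R r i)"
  proof -
    have Gxe: "G *v xe = (\<Sum>i=0..k. ct i *\<^sub>R (G *v x i))"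
      unfolding xe_def by (simp add: linear_sum[OF matrix_vector_mul_linear] matrix_vector_mult_scaleR)
    have c1: "(\<Sum>i=0..k. ct i *\<^sub>R \<xi> x0) = \<xi> x0" by (simp add: scaleR_sum_left[symmetric] ct_sum)
    have "(\<Sum>i=0..k. ct i *\<^sub>R r i) = xe - (\<Sum>i=0..k. ct i *\<^sub>R (G *v x i)) - (\<Sum>i=0..k. ct i *\<^sub>R \<xi> (x i))"
      by (simp add: r_def xe_def xS F_decomp scaleR_diff_right scaleR_add_right sum.distrib sum_subtractf)
    moreover have "(\<Sum>i=0..k. ct i *\<^sub>R (\<xi> (x i) - \<xi> x0)) = (\<Sum>i=0..k. ct i *\<^sub>R \<xi> (x i)) - \<xi> x0"
      by (simp add: scaleR_diff_right sum_subtractf c1)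
    ultimately show ?thesis by (simp add: F_decomp Gxe)
  qed
  have D1: "norm (\<xi> xe - \<xi> x0) \<le> \<alpha> * (C * (real k * N))"
  proof -
    have "xe - x0 = (\<Sum>i=0..k. ct i *\<^sub>R (x i - x0))"
      by (simp add: xe_def scaleR_diff_right sum_subtractf scaleR_sum_left[symmetric] ct_sum)
    moreover have "norm (\<Sum>i=0..k. ct i *\<^sub>R (x i - x0)) \<le> C * (real k * N)"
    proof (rule sb[OF _ ct_l1])
      fix i assume "i \<le> k"
      thus "norm (x i - x0) \<le> real k * N" using xd[of i] N0
        by (meson mult_right_mono of_nat_le_iff order_trans)
    qed (use N0 in auto)
    ultimately show ?thesis using xilip[of xe x0] alpha by (smt (verit) mult_left_mono)
  qed
  have D2: "norm (\<Sum>i=0..k. ct i *\<^sub>R (\<xi> (x i) - \<xi> x0)) \<le> C * (\<alpha> * (real k * N))"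
  proof (rule sb[OF _ ct_l1])
    fix i assume "i \<le> k"
    hence "norm (x i - x0) \<le> real k * N" using xd[of i] N0
      by (meson mult_right_mono of_nat_le_iff order_trans)
    thus "norm (\<xi> (x i) - \<xi> x0) \<le> \<alpha> * (real k * N)" using xilip[of "x i" x0] alpha
      by (smt (verit) mult_left_mono)
  qed (use N0 alpha in auto)
  have "norm (F xe - xe) \<le> norm (\<xi> xe - \<xi> x0) + norm (\<Sum>i=0..k. ct i *\<^sub>R (\<xi> (x i) - \<xi> x0)) + norm (\<Sum>i=0..k. ct i *\<^sub>R r i)"
    unfolding decomp by (intro order_trans[OF norm_triangle_ineq4] add_mono order_refl norm_triangle_ineq4)
  also have "\<dots> \<le> \<alpha> * (C * (real k * N)) + C * (\<alpha> * (real k * N)) + (M * N + C * (real k * \<alpha> * N) + \<epsilon> * N)"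
    using D1 D2 Rct by linarith
  also have "\<dots> = (M + 3 * C * \<alpha> * real k + \<epsilon>) * N" by (simp add: algebra_simps)
  finally show ?thesis unfolding Let_def xe_def x_def M_def N_def .
qed

end
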